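(* A ranking method is feasible if and only if it is faithful and consistent.
   Context: Let $\mathcal{X}$ be a finite set of alternatives. A proto-ranking is an irreflexive transitive relation; a ranking is a total proto-ranking; a tournament is a total asymmetric relation on $\mathcal{X}$. Interaction: given a tournament $\mathrel{W}$, start from $R_0=\varnothing$; in each period with $R_{t-1}$ not total the chair offers a pair $\{x,y\}$ unranked by $R_{t-1}$, the winner is $x$ if $x\mathrel{W}y$ and $y$ otherwise, and $R_t$ is the transitive closure of $R_{t-1}\cup\{(\text{winner},\text{loser})\}$; stop when $R_t$ is total. A strategy assigns to each non-terminal history (sequence of (winner, loser) pairs) a pair unranked at it; its outcome under $\mathrel{W}$ is the final ranking. A ranking method is a map $\rho$ assigning a ranking to each tournament. It is feasible if there is a strategy $\sigma$ such that $\rho(\mathrel{W})$ is the outcome of $\sigma$ under $\mathrel{W}$ for every tournament $\mathrel{W}$. For a tournament $\mathrel{W}$, a ranking $R$ is more aligned with $\mathrel{W}$ than a ranking $R'$ if for all $x,y$ with $x\mathrel{W}y$, $xR'y$ implies $xRy$. $\rho$ is faithful if for every tournament $\mathrel{W}$, no ranking $R\neq\rho(\mathrel{W})$ is more aligned with $\mathrel{W}$ than $\rho(\mathrel{W})$. $\rho$ is consistent if whenever $\rho(\mathrel{W})\ne\rho(\mathrel{W}')$ for tournaments $\mathrel{W},\mathrel{W}'$, there exist alternatives $x,y$ with $x\mathrel{W}y$ and $y\mathrel{W}'x$ such that for every tournament $\mathrel{W}''\supseteq \mathrel{W}\cap\mathrel{W}'$: $x\,\rho(\mathrel{W}'')\,y$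 if and only if $x\mathrel{W}''y$. *)

theory Defs
  imports Main
begin

definition proto_ranking :: "'a rel \<Rightarrow> bool" where
  "proto_ranking R \<longleftrightarrow> irrefl R \<and> trans R"

definition ranking :: "'a rel \<Rightarrow> bool" where
  "ranking R \<longleftrightarrow> proto_ranking R \<and> total R"

definition tournament :: "'a rel \<Rightarrow> bool" where
  "tournament W \<longleftrightarrow> total W \<and> asym W"

definition unranked :: "'a rel \<Rightarrow> 'a \<Rightarrow> 'a \<Rightarrow> bool" where
  "unranked R x y \<longleftrightarrow> x \<noteq> y \<and> (x, y) \<notin> R \<and> (y, x) \<notin> R"

text \<open>Relation reached after a history (chronological list of (winner, loser) pairs):
  R_0 = {}, R_t = transitive closure of R_(t-1) plus the new pair.\<close>
definition rel_of :: "('a \<times> 'a) list \<Rightarrow> 'a rel" where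
  "rel_of h = foldl (\<lambda>R p. trancl (insert p R)) {} h"

inductive_set histories :: "('a \<times> 'a) list set" where
  Nil: "[] \<in> histories"
| snoc: "h \<in> histories \<Longrightarrow> \<not> total (rel_of h) \<Longrightarrow> unranked (rel_of h) w l
          \<Longrightarrow> h @ [(w, l)] \<in> histories"

text \<open>A strategy offers, at each non-terminal history, a pair (order irrelevant) unranked at it.\<close>
definition is_strategy :: "(('a \<times> 'a) list \<Rightarrow> 'a \<times> 'a) \<Rightarrow> bool" where
  "is_strategy \<sigma> \<longleftrightarrow>
     (\<forall>h \<in> histories. \<not> total (rel_of h) \<longrightarrow> unranked (rel_of h) (fst (\<sigma> h)) (snd (\<sigma> h)))"

definition duel :: "'a rel \<Rightarrow> 'a \<times> 'a \<Rightarrow> 'a \<times> 'a" where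
  "duel W p = (if p \<in> W then p else (snd p, fst p))"

fun hist_at :: "(('a \<times> 'a) list \<Rightarrow> 'a \<times> 'a) \<Rightarrow> 'a rel \<Rightarrow> nat \<Rightarrow> ('a \<times> 'a) list" where
  "hist_at \<sigma> W 0 = []"
| "hist_at \<sigma> W (Suc n) =
     (let h = hist_at \<sigma> W n in if total (rel_of h) then h else h @ [duel W (\<sigma> h)])"

definition outcome :: "(('a \<times> 'a) list \<Rightarrow> 'a \<times> 'a) \<Rightarrow> 'a rel \<Rightarrow> 'a rel \<Rightarrow> bool" where
  "outcome \<sigma> W R \<longleftrightarrow> (\<exists>n. total (rel_of (hist_at \<sigma> W n)) \<and> R = rel_of (hist_at \<sigma> W n))"

definition ranking_method :: "('a rel \<Rightarrow> 'a rel) \<Rightarrow> bool" where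
  "ranking_method \<rho> \<longleftrightarrow> (\<forall>W. tournament W \<longrightarrow> ranking (\<rho> W))"

definition feasible :: "('a rel \<Rightarrow> 'a rel) \<Rightarrow> bool" where
  "feasible \<rho> \<longleftrightarrow> (\<exists>\<sigma>. is_strategy \<sigma> \<and> (\<forall>W. tournament W \<longrightarrow> outcome \<sigma> W (\<rho> W)))"

definition more_aligned :: "'a rel \<Rightarrow> 'a rel \<Rightarrow> 'a rel \<Rightarrow> bool" where
  "more_aligned W R R' \<longleftrightarrow> (\<forall>x y. (x, y) \<in> W \<longrightarrow> (x, y) \<in> R' \<longrightarrow> (x, y) \<in> R)"

definition faithful :: "('a rel \<Rightarrow> 'a rel) \<Rightarrow> bool" where
  "faithful \<rho> \<longleftrightarrow>
     (\<forall>W. tournament W \<longrightarrow> \<not> (\<exists>R. ranking R \<and> R \<noteq> \<rho> W \<and> more_aligned W R (\<rho> W)))"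

definition consistent :: "('a rel \<Rightarrow> 'a rel) \<Rightarrow> bool" where
  "consistent \<rho> \<longleftrightarrow>
     (\<forall>W W'. tournament W \<longrightarrow> tournament W' \<longrightarrow> \<rho> W \<noteq> \<rho> W' \<longrightarrow>
        (\<exists>x y. (x, y) \<in> W \<and> (y, x) \<in> W' \<and>
           (\<forall>W''. tournament W'' \<longrightarrow> W \<inter> W' \<subseteq> W'' \<longrightarrow>
              ((x, y) \<in> \<rho> W'' \<longleftrightarrow> (x, y) \<in> W''))))"

end

theory Submission
  imports Defs
begin


lemma tournament_iff: "tournament W \<longleftrightarrow> (\<forall>x y. x\<noteq>y \<longrightarrow> (x,y)\<in>W \<or> (y,x)\<in>W) \<and> (\<forall>x y. (x,y)\<in>W \<longrightarrow> (y,x)\<notin>W)"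
  unfolding tournament_def total_on_def asym_iff by blast

lemma ranking_iff: "ranking R \<longleftrightarrow> (\<forall>x. (x,x)\<notin>R) \<and> (\<forall>x y z. (x,y)\<in>R \<longrightarrow> (y,z)\<in>R \<longrightarrow> (x,z)\<in>R) \<and> (\<forall>x y. x\<noteq>y \<longrightarrow> (x,y)\<in>R \<or> (y,x)\<in>R)"
  unfolding ranking_def proto_ranking_def total_on_def irrefl_def trans_def by blast

lemma trancl_sub_trans: "r \<subseteq> s \<Longrightarrow> trans s \<Longrightarrow> r\<^sup>+ \<subseteq> s"
proof
  fix q assume "q \<in> r\<^sup>+" "r \<subseteq> s" "trans s"
  then have "q \<in> s\<^sup>+" using trancl_mono by blast
  then show "q \<in> s" using \<open>trans s\<close> trancl_id by blast
qed

lemma trancl_insert_trancl: "trancl (insert p (r\<^sup>+)) = (insert p r)\<^sup>+"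
proof
  have "insert p (r\<^sup>+) \<subseteq> (insert p r)\<^sup>+"
  proof -
    have "r\<^sup>+ \<subseteq> (insert p r)\<^sup>+" using trancl_mono[of _ r "insert p r"] by blast
    then show ?thesis by (auto intro: r_into_trancl')
  qed
  then show "trancl (insert p (r\<^sup>+)) \<subseteq> (insert p r)\<^sup>+"
    using trancl_sub_trans trans_trancl by blast
  have "insert p r \<subseteq> insert p (r\<^sup>+)" by (auto intro: r_into_trancl')
  then show "(insert p r)\<^sup>+ \<subseteq> trancl (insert p (r\<^sup>+))"
    using trancl_mono by blast
qed

lemma rel_of_snoc: "rel_of (h @ [p]) = trancl (insert p (rel_of h))"
  unfolding rel_of_def by simp

lemma rel_of_set: "rel_of h = (set h)\<^sup>+"
proof (induction h rule: rev_induct)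
  case Nil then show ?case by (simp add: rel_of_def)
next
  case (snoc p h) then show ?case by (simp add: rel_of_snoc trancl_insert_trancl)
qed

lemma ranking_trans: "ranking R \<Longrightarrow> trans R"
  unfolding ranking_def proto_ranking_def by simp

lemma sub_total_eq:
  assumes "R \<subseteq> P" "total R" "ranking P" shows "R = P"
proof
  show "P \<subseteq> R"
  proof
    fix q assume q: "q \<in> P"
    obtain a b where ab: "q = (a,b)" by fastforce
    have "a \<noteq> b" using q ab assms(3) unfolding ranking_iff by auto
    then have "(a,b) \<in> R \<or> (b,a) \<in> R" using assms(2) unfolding total_on_def by auto
    moreover have "(b,a) \<notin> P" using q ab assms(3) unfolding ranking_iff by blast
    ultimately show "q \<in> R" using ab assms(1) by blast
  qed
qed (rule assms(1))

lemma duel_cases: "duel W p = p \<or> duel W p = (snd p, fst p)"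
  unfolding duel_def by auto

lemma duel_in: "tournament W \<Longrightarrow> fst p \<noteq> snd p \<Longrightarrow> duel W p \<in> W"
  unfolding duel_def tournament_iff by (cases p) auto

lemma duel_eq: "tournament W \<Longrightarrow> fst p \<noteq> snd p \<Longrightarrow> d \<in> W \<Longrightarrow> d = p \<or> d = (snd p, fst p) \<Longrightarrow> duel W p = d"
  unfolding duel_def tournament_iff by (cases p) auto

lemma hist_stable: "total (rel_of (hist_at \<sigma> W n)) \<Longrightarrow> hist_at \<sigma> W (n+k) = hist_at \<sigma> W n"
  by (induction k) (auto simp: Let_def)

lemma hist_prefix: "\<exists>t. hist_at \<sigma> W (n+k) = hist_at \<sigma> W n @ t"
  by (induction k) (auto simp: Let_def)

lemma hist_histories:
  assumes "is_strategy \<sigma>" "tournament W"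
  shows "hist_at \<sigma> W n \<in> histories"
proof (induction n)
  case 0 then show ?case by (simp add: histories.Nil)
next
  case (Suc n)
  let ?h = "hist_at \<sigma> W n"
  show ?case
  proof (cases "total (rel_of ?h)")
    case True then show ?thesis using Suc by simp
  next
    case False
    then have u: "unranked (rel_of ?h) (fst (\<sigma> ?h)) (snd (\<sigma> ?h))"
      using assms(1) Suc unfolding is_strategy_def by blast
    obtain w l where wl: "duel W (\<sigma> ?h) = (w,l)" by fastforce
    have "unranked (rel_of ?h) w l" using u wl duel_cases[of W "\<sigma> ?h"] unfolding unranked_def by (cases "\<sigma> ?h") auto
    then have "?h @ [(w,l)] \<in> histories" by (rule histories.snoc[OF Suc False])
    then show ?thesis using False wl by simp
  qed
qed

lemma outcome_sub:
  assumes "outcome \<sigma> W R"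
  shows "set (hist_at \<sigma> W n) \<subseteq> R"
proof -
  obtain m where m: "total (rel_of (hist_at \<sigma> W m))" "R = rel_of (hist_at \<sigma> W m)"
    using assms unfolding outcome_def by blast
  obtain t where t: "hist_at \<sigma> W (n + m) = hist_at \<sigma> W n @ t" using hist_prefix by blast
  have "hist_at \<sigma> W (m + n) = hist_at \<sigma> W m" using hist_stable m(1) by blast
  then have "set (hist_at \<sigma> W n) \<subseteq> set (hist_at \<sigma> W m)" using t by (simp add: add.commute)
  then show ?thesis using m(2) rel_of_set by auto
qed


lemma hist_in_W:
  assumes "is_strategy \<sigma>" "tournament W"
  shows "set (hist_at \<sigma> W n) \<subseteq> W"
proof (induction n)
  case 0 then show ?case by simp
next
  case (Suc n)
  let ?h = "hist_at \<sigma> W n"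
  show ?case
  proof (cases "total (rel_of ?h)")
    case True then show ?thesis using Suc by simp
  next
    case False
    then have u: "unranked (rel_of ?h) (fst (\<sigma> ?h)) (snd (\<sigma> ?h))"
      using assms(1) hist_histories[OF assms] unfolding is_strategy_def by blast
    then have "duel W (\<sigma> ?h) \<in> W" using duel_in[OF assms(2)] unfolding unranked_def by blast
    then show ?thesis using False Suc by (simp add: Let_def)
  qed
qed

lemma feasible_faithful:
  assumes rm: "ranking_method \<rho>" and f: "feasible \<rho>"
  shows "faithful \<rho>"
  unfolding faithful_def
proof (intro allI impI notI)
  fix W :: "'a rel" assume W: "tournament W"
  assume "\<exists>R. ranking R \<and> R \<noteq> \<rho> W \<and> more_aligned W R (\<rho> W)"
  then obtain R where R: "ranking R" "R \<noteq> \<rho> W" "more_aligned W R (\<rho> W)" by blast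
  obtain \<sigma> where s: "is_strategy \<sigma>" "\<forall>W. tournament W \<longrightarrow> outcome \<sigma> W (\<rho> W)"
    using f unfolding feasible_def by blast
  then obtain n where n: "total (rel_of (hist_at \<sigma> W n))" "\<rho> W = rel_of (hist_at \<sigma> W n)"
    using W unfolding outcome_def by blast
  let ?S = "set (hist_at \<sigma> W n)"
  have "?S \<subseteq> W" using hist_in_W s(1) W by blast
  moreover have "?S \<subseteq> \<rho> W" using n(2) rel_of_set by auto
  ultimately have "?S \<subseteq> R" using R(3) unfolding more_aligned_def by auto
  then have "\<rho> W \<subseteq> R" using n(2) rel_of_set trancl_sub_trans ranking_trans[OF R(1)] by metis
  then have "\<rho> W = R" using sub_total_eq n R(1) by metis
  then show False using R(2) by simp
qed


lemma hist_Suc_nt: "\<not> total (rel_of (hist_at \<sigma> W n)) \<Longrightarrow>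
  hist_at \<sigma> W (Suc n) = hist_at \<sigma> W n @ [duel W (\<sigma> (hist_at \<sigma> W n))]"
  by (simp add: Let_def)

lemma feasible_consistent:
  assumes rm: "ranking_method \<rho>" and f: "feasible \<rho>"
  shows "consistent \<rho>"
  unfolding consistent_def
proof (intro allI impI)
  fix W W' :: "'a rel"
  assume W: "tournament W" and W': "tournament W'" and ne: "\<rho> W \<noteq> \<rho> W'"
  obtain \<sigma> where s: "is_strategy \<sigma>" "\<forall>W. tournament W \<longrightarrow> outcome \<sigma> W (\<rho> W)"
    using f unfolding feasible_def by blast
  obtain m where m: "total (rel_of (hist_at \<sigma> W m))" "\<rho> W = rel_of (hist_at \<sigma> W m)"
    using W s unfolding outcome_def by blast
  obtain m' where m': "total (rel_of (hist_at \<sigma> W' m'))" "\<rho> W' = rel_of (hist_at \<sigma> W' m')"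
    using W' s unfolding outcome_def by blast
  have "\<exists>n. hist_at \<sigma> W n \<noteq> hist_at \<sigma> W' n"
  proof (rule ccontr)
    assume "\<not> ?thesis"
    then have eq: "hist_at \<sigma> W (m + m') = hist_at \<sigma> W' (m' + m)" by (simp add: add.commute)
    have "hist_at \<sigma> W (m + m') = hist_at \<sigma> W m" using hist_stable m(1) by blast
    moreover have "hist_at \<sigma> W' (m' + m) = hist_at \<sigma> W' m'" using hist_stable m'(1) by blast
    ultimately show False using eq m(2) m'(2) ne by simp
  qed
  then obtain n where n: "hist_at \<sigma> W n \<noteq> hist_at \<sigma> W' n"
    and nmin: "\<And>j. j < n \<Longrightarrow> hist_at \<sigma> W j = hist_at \<sigma> W' j"
    using exists_least_iff[of "\<lambda>n. hist_at \<sigma> W n \<noteq> hist_at \<sigma> W' n"] by blast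
  obtain k where k: "n = Suc k" using n by (cases n) auto
  define h where "h = hist_at \<sigma> W k"
  have hk': "hist_at \<sigma> W' k = h" using nmin k h_def by simp
  have nt: "\<not> total (rel_of h)" using n k h_def hk' by (auto simp: Let_def)
  have hist: "h \<in> histories" using hist_histories[OF s(1) W] h_def by simp
  define p where "p = \<sigma> h"
  have u: "unranked (rel_of h) (fst p) (snd p)" using s(1) hist nt p_def unfolding is_strategy_def by blast
  then have pne: "fst p \<noteq> snd p" unfolding unranked_def by simp
  have dd: "duel W p \<noteq> duel W' p" using n k h_def hk' nt p_def by (simp add: Let_def)
  obtain x y where xy: "duel W p = (x,y)" by fastforce
  have xyW: "(x,y) \<in> W" using duel_in[OF W pne] xy by simp
  obtain a b where ab: "p = (a,b)" by fastforce
  have c1: "duel W p = (a,b) \<or> duel W p = (b,a)" using duel_cases[of W p] ab by simp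
  have c2: "duel W' p = (a,b) \<or> duel W' p = (b,a)" using duel_cases[of W' p] ab by simp
  have "duel W' p = (y,x)" using c1 c2 dd xy by auto
  then have yxW': "(y,x) \<in> W'" using duel_in[OF W' pne] by simp
  have xy_p: "(x,y) = p \<or> (x,y) = (snd p, fst p)" using duel_cases[of W p] xy by auto
  show "\<exists>x y. (x, y) \<in> W \<and> (y, x) \<in> W' \<and>
           (\<forall>W''. tournament W'' \<longrightarrow> W \<inter> W' \<subseteq> W'' \<longrightarrow>
              ((x, y) \<in> \<rho> W'' \<longleftrightarrow> (x, y) \<in> W''))"
  proof (intro exI conjI allI impI)
    show "(x,y) \<in> W" by (rule xyW)
    show "(y,x) \<in> W'" by (rule yxW')
    fix W'' :: "'a rel" assume W'': "tournament W''" and sub: "W \<inter> W' \<subseteq> W''"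
    have agree: "j \<le> k \<Longrightarrow> hist_at \<sigma> W'' j = hist_at \<sigma> W j" for j
    proof (induction j)
      case 0 then show ?case by simp
    next
      case (Suc j)
      let ?g = "hist_at \<sigma> W j"
      have IH: "hist_at \<sigma> W'' j = ?g" using Suc by simp
      have g': "hist_at \<sigma> W' j = ?g" using nmin Suc k by simp
      show ?case
      proof (cases "total (rel_of ?g)")
        case True then show ?thesis using IH by (simp add: Let_def)
      next
        case False
        have gh: "?g \<in> histories" using hist_histories[OF s(1) W] by blast
        have ug: "fst (\<sigma> ?g) \<noteq> snd (\<sigma> ?g)" using s(1) gh False unfolding is_strategy_def unranked_def by blast
        have "Suc j < n" using Suc.prems k by simp
        then have "hist_at \<sigma> W (Suc j) = hist_at \<sigma> W' (Suc j)" using nmin by blast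
        then have e: "duel W (\<sigma> ?g) = duel W' (\<sigma> ?g)" using False g' by (simp add: Let_def)
        have "duel W (\<sigma> ?g) \<in> W \<inter> W'" using duel_in[OF W ug] duel_in[OF W' ug] e by simp
        then have "duel W'' (\<sigma> ?g) = duel W (\<sigma> ?g)"
          using duel_eq[OF W'' ug] duel_cases[of W "\<sigma> ?g"] sub by blast
        then show ?thesis using IH False by (simp add: Let_def)
      qed
    qed
    have hk'': "hist_at \<sigma> W'' k = h" using agree h_def by simp
    have hn'': "hist_at \<sigma> W'' n = h @ [duel W'' p]" using hk'' nt k p_def by (simp add: Let_def)
    have inrho: "duel W'' p \<in> \<rho> W''"
      using outcome_sub[of \<sigma> W'' "\<rho> W''" n] s(2) W'' hn'' by auto
    have rk: "ranking (\<rho> W'')" using rm W'' unfolding ranking_method_def by blast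
    show "(x, y) \<in> \<rho> W'' \<longleftrightarrow> (x, y) \<in> W''"
    proof
      assume a: "(x,y) \<in> \<rho> W''"
      show "(x,y) \<in> W''"
      proof (rule ccontr)
        assume "(x,y) \<notin> W''"
        moreover have "x \<noteq> y" using xyW W unfolding tournament_iff by blast
        ultimately have "(y,x) \<in> W''" using W'' unfolding tournament_iff by blast
        moreover have "(y,x) = p \<or> (y,x) = (snd p, fst p)" using xy_p ab by auto
        ultimately have "duel W'' p = (y,x)" using duel_eq[OF W'' pne] by blast
        then have "(y,x) \<in> \<rho> W''" using inrho by simp
        then show False using a rk unfolding ranking_iff by blast
      qed
    next
      assume "(x,y) \<in> W''"
      then have "duel W'' p = (x,y)" using duel_eq[OF W'' pne] xy_p by blast
      then show "(x,y) \<in> \<rho> W''" using inrho by simp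
    qed
  qed
qed



definition betw :: "'a rel \<Rightarrow> 'a \<Rightarrow> 'a \<Rightarrow> 'a set" where
  "betw P x y = {z. (x,z) \<in> P \<and> (z,y) \<in> P}"

lemma adjacent_exists:
  fixes P R :: "('a::finite) rel"
  assumes RP: "R \<subseteq> P" and tR: "trans R" and nt: "\<not> total R" and rP: "ranking P"
  shows "\<exists>x y. (x,y) \<in> P \<and> (x,y) \<notin> R \<and> (\<forall>z. \<not> ((x,z) \<in> P \<and> (z,y) \<in> P))"
proof -
  obtain u v where uv: "u \<noteq> v" "(u,v) \<notin> R" "(v,u) \<notin> R" using nt unfolding total_on_def by blast
  then have "\<exists>q. q \<in> P - R" using rP unfolding ranking_iff by blast
  then obtain q where q: "q \<in> P - R" "\<forall>q'. q' \<in> P - R \<longrightarrow> card (betw P (fst q) (snd q)) \<le> card (betw P (fst q') (snd q'))"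
    using ex_has_least_nat[of "\<lambda>q. q \<in> P - R" _ "\<lambda>q. card (betw P (fst q) (snd q))"] by blast
  obtain x y where xy: "q = (x,y)" by fastforce
  show ?thesis
  proof (rule exI[of _ x], rule exI[of _ y], intro conjI)
    show "(x,y) \<in> P" "(x,y) \<notin> R" using q xy by auto
    show "\<forall>z. \<not> ((x,z) \<in> P \<and> (z,y) \<in> P)"
    proof (intro allI notI)
    fix z assume z: "(x,z) \<in> P \<and> (z,y) \<in> P"
    have tP: "\<And>a b c. (a,b) \<in> P \<Longrightarrow> (b,c) \<in> P \<Longrightarrow> (a,c) \<in> P" using rP unfolding ranking_iff by blast
    have irP: "\<And>a. (a,a) \<notin> P" using rP unfolding ranking_iff by blast
    have s1: "betw P x z \<subset> betw P x y"
    proof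
      show "betw P x z \<subseteq> betw P x y" using z tP unfolding betw_def by blast
      have "z \<in> betw P x y" "z \<notin> betw P x z" using z irP unfolding betw_def by auto
      then show "betw P x z \<noteq> betw P x y" by blast
    qed
    have s2: "betw P z y \<subset> betw P x y"
    proof
      show "betw P z y \<subseteq> betw P x y" using z tP unfolding betw_def by blast
      have "z \<in> betw P x y" "z \<notin> betw P z y" using z irP unfolding betw_def by auto
      then show "betw P z y \<noteq> betw P x y" by blast
    qed
    have "card (betw P x z) < card (betw P x y)" using s1 psubset_card_mono finite by blast
    then have "(x,z) \<in> R" using q xy z by fastforce
    moreover have "card (betw P z y) < card (betw P x y)" using s2 psubset_card_mono finite by blast
    then have "(z,y) \<in> R" using q xy z by fastforce
    ultimately have "(x,y) \<in> R" using tR unfolding trans_def by blast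
    then show False using q xy by simp
  qed
  qed
qed

lemma swap_ranking:
  assumes rP: "ranking P" and xy: "(x,y) \<in> P" and adj: "\<forall>z. \<not> ((x,z) \<in> P \<and> (z,y) \<in> P)"
  shows "ranking (P - {(x,y)} \<union> {(y,x)})"
proof -
  have irP: "\<And>a. (a,a) \<notin> P" and tP: "\<And>a b c. (a,b) \<in> P \<Longrightarrow> (b,c) \<in> P \<Longrightarrow> (a,c) \<in> P"
    and toP: "\<And>a b. a \<noteq> b \<Longrightarrow> (a,b) \<in> P \<or> (b,a) \<in> P" using rP unfolding ranking_iff by blast+
  have xny: "x \<noteq> y" using xy irP by blast
  show ?thesis unfolding ranking_iff
  proof (intro conjI allI impI)
    show "\<And>a. (a,a) \<notin> P - {(x,y)} \<union> {(y,x)}" using irP xny by blast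
    show "\<And>a b. a \<noteq> b \<Longrightarrow> (a,b) \<in> P - {(x,y)} \<union> {(y,x)} \<or> (b,a) \<in> P - {(x,y)} \<union> {(y,x)}"
      using toP by blast
    fix a b c assume ab: "(a,b) \<in> P - {(x,y)} \<union> {(y,x)}" and bc: "(b,c) \<in> P - {(x,y)} \<union> {(y,x)}"
    show "(a,c) \<in> P - {(x,y)} \<union> {(y,x)}"
    proof (cases "(a,b) = (y,x)")
      case True
      then have ab': "a = y" "b = x" by auto
      show ?thesis
      proof (cases "(b,c) = (y,x)")
        case True then show ?thesis using ab' xny by auto
      next
        case False
        then have xc: "(x,c) \<in> P" "c \<noteq> y" using bc ab' by auto
        have "(c,y) \<notin> P" using adj xc by blast
        moreover have "c \<noteq> y" by (rule xc(2))
        ultimately have "(y,c) \<in> P" using toP by blast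
        then show ?thesis using ab' xny by auto
      qed
    next
      case False
      then have abP: "(a,b) \<in> P" "(a,b) \<noteq> (x,y)" using ab by auto
      show ?thesis
      proof (cases "(b,c) = (y,x)")
        case True
        then have bc': "b = y" "c = x" by auto
        have "a \<noteq> x" using abP bc' by auto
        have "(x,a) \<notin> P" using adj abP bc' by blast
        then have "(a,x) \<in> P" using toP \<open>a \<noteq> x\<close> by blast
        then show ?thesis using bc' xny by auto
      next
        case False
        then have bcP: "(b,c) \<in> P" "(b,c) \<noteq> (x,y)" using bc by auto
        have "(a,c) \<in> P" using tP abP bcP by blast
        moreover have "(a,c) \<noteq> (x,y)" using adj abP bcP by blast
        ultimately show ?thesis by blast
      qed
    qed
  qed
qed


lemma ranking_method_D: "ranking_method \<rho> \<Longrightarrow> tournament W \<Longrightarrow> ranking (\<rho> W)"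
  unfolding ranking_method_def by blast

lemma good_pair:
  fixes \<rho> :: "('a::finite) rel \<Rightarrow> 'a rel"
  assumes rm: "ranking_method \<rho>" and fa: "faithful \<rho>" and co: "consistent \<rho>"
    and W: "tournament W" and SW: "S \<subseteq> W"
    and inv: "\<forall>W'. tournament W' \<and> S \<subseteq> W' \<longrightarrow> S \<subseteq> \<rho> W'"
    and nt: "\<not> total (S\<^sup>+)"
  shows "\<exists>x y. unranked (S\<^sup>+) x y \<and> (\<forall>W''. tournament W'' \<and> S \<subseteq> W'' \<longrightarrow> ((x,y) \<in> \<rho> W'' \<longleftrightarrow> (x,y) \<in> W''))"
proof -
  define W1 where "W1 = S \<union> (W\<inverse> - S\<inverse>)"
  have Wt: "\<forall>x y. x\<noteq>y \<longrightarrow> (x,y)\<in>W \<or> (y,x)\<in>W" "\<forall>x y. (x,y)\<in>W \<longrightarrow> (y,x)\<notin>W"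
    using W unfolding tournament_iff by blast+
  have W1: "tournament W1" unfolding tournament_iff W1_def using Wt SW by blast
  have SW1: "S \<subseteq> W1" unfolding W1_def by blast
  have WW1: "W \<inter> W1 \<subseteq> S" unfolding W1_def using Wt by blast
  have supS: "\<And>V. tournament V \<Longrightarrow> S \<subseteq> V \<Longrightarrow> S\<^sup>+ \<subseteq> \<rho> V"
    using inv trancl_sub_trans ranking_trans ranking_method_D[OF rm] by metis
  have ne: "\<rho> W \<noteq> \<rho> W1"
  proof
    assume eq: "\<rho> W = \<rho> W1"
    define P where "P = \<rho> W"
    have rP: "ranking P" using ranking_method_D[OF rm W] P_def by simp
    have SP: "S\<^sup>+ \<subseteq> P" using supS[OF W SW] P_def by simp
    obtain x y where xy: "(x,y) \<in> P" "(x,y) \<notin> S\<^sup>+" "\<forall>z. \<not> ((x,z) \<in> P \<and> (z,y) \<in> P)"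
      using adjacent_exists[OF SP trans_trancl nt rP] by blast
    have xyS: "(x,y) \<notin> S" using xy(2) by auto
    define V where "V = (if (x,y) \<in> W then W1 else W)"
    have V: "tournament V" using W W1 V_def by simp
    have PV: "\<rho> V = P" using V_def P_def eq by simp
    have xyV: "(x,y) \<notin> V" using xyS Wt V_def unfolding W1_def by auto
    define R' where "R' = P - {(x,y)} \<union> {(y,x)}"
    have rR': "ranking R'" using swap_ranking[OF rP xy(1) xy(3)] R'_def by simp
    have xny: "x \<noteq> y" using xy(1) rP unfolding ranking_iff by blast
    have "R' \<noteq> P" using xy(1) xny R'_def by auto
    moreover have "more_aligned V R' (\<rho> V)" unfolding more_aligned_def PV R'_def using xyV by auto
    ultimately show False using fa V rR' PV unfolding faithful_def by metis
  qed
  obtain x y where xy: "(x,y) \<in> W" "(y,x) \<in> W1"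
    and pr: "\<forall>W''. tournament W'' \<longrightarrow> W \<inter> W1 \<subseteq> W'' \<longrightarrow> ((x, y) \<in> \<rho> W'' \<longleftrightarrow> (x, y) \<in> W'')"
    using co W W1 ne unfolding consistent_def by blast
  have xny: "x \<noteq> y" using xy(1) Wt by blast
  have n1: "(x,y) \<notin> S\<^sup>+"
  proof
    assume "(x,y) \<in> S\<^sup>+"
    then have "(x,y) \<in> \<rho> W1" using supS[OF W1 SW1] by blast
    then have "(x,y) \<in> W1" using pr W1 by blast
    then show False using xy(2) W1 unfolding tournament_iff by blast
  qed
  have n2: "(y,x) \<notin> S\<^sup>+"
  proof
    assume "(y,x) \<in> S\<^sup>+"
    then have "(y,x) \<in> \<rho> W" using supS[OF W SW] by blast
    moreover have "(x,y) \<in> \<rho> W" using pr W xy(1) by blast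
    ultimately show False using ranking_method_D[OF rm W] unfolding ranking_iff by blast
  qed
  show ?thesis
  proof (intro exI conjI allI impI)
    show "unranked (S\<^sup>+) x y" unfolding unranked_def using xny n1 n2 by blast
    fix W'' assume "tournament W'' \<and> S \<subseteq> W''"
    then show "(x, y) \<in> \<rho> W'' \<longleftrightarrow> (x, y) \<in> W''" using pr WW1 by blast
  qed
qed


definition good :: "('a rel \<Rightarrow> 'a rel) \<Rightarrow> ('a \<times> 'a) list \<Rightarrow> 'a \<times> 'a \<Rightarrow> bool" where
  "good \<rho> h p \<longleftrightarrow> unranked (rel_of h) (fst p) (snd p) \<and>
     (\<forall>W''. tournament W'' \<and> set h \<subseteq> W'' \<longrightarrow> (p \<in> \<rho> W'' \<longleftrightarrow> p \<in> W''))"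

definition strat :: "('a rel \<Rightarrow> 'a rel) \<Rightarrow> ('a \<times> 'a) list \<Rightarrow> 'a \<times> 'a" where
  "strat \<rho> h = (if \<exists>p. good \<rho> h p then SOME p. good \<rho> h p
                 else SOME p. unranked (rel_of h) (fst p) (snd p))"

lemma strat_unranked:
  assumes "\<not> total (rel_of h)"
  shows "unranked (rel_of h) (fst (strat \<rho> h)) (snd (strat \<rho> h))"
proof (cases "\<exists>p. good \<rho> h p")
  case True
  then have "good \<rho> h (strat \<rho> h)" unfolding strat_def by (simp add: someI_ex)
  then show ?thesis unfolding good_def by blast
next
  case False
  have "\<exists>p. unranked (rel_of h) (fst p) (snd p)"
    using assms unfolding total_on_def unranked_def by auto
  then have "unranked (rel_of h) (fst (SOME p. unranked (rel_of h) (fst p) (snd p))) (snd (SOME p. unranked (rel_of h) (fst p) (snd p)))"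
    by (rule someI_ex)
  then show ?thesis using False unfolding strat_def by presburger
qed

lemma strat_good: "\<exists>p. good \<rho> h p \<Longrightarrow> good \<rho> h (strat \<rho> h)"
  unfolding strat_def by (simp add: someI_ex)

lemma strat_is_strategy: "is_strategy (strat \<rho>)"
  unfolding is_strategy_def using strat_unranked by blast

lemma strat_inv:
  fixes \<rho> :: "('a::finite) rel \<Rightarrow> 'a rel"
  assumes rm: "ranking_method \<rho>" and fa: "faithful \<rho>" and co: "consistent \<rho>"
    and W: "tournament W"
  shows "set (hist_at (strat \<rho>) W n) \<subseteq> W \<and>
    (\<forall>W'. tournament W' \<and> set (hist_at (strat \<rho>) W n) \<subseteq> W' \<longrightarrow> set (hist_at (strat \<rho>) W n) \<subseteq> \<rho> W')"
proof (induction n)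
  case 0 then show ?case by simp
next
  case (Suc n)
  let ?h = "hist_at (strat \<rho>) W n"
  show ?case
  proof (cases "total (rel_of ?h)")
    case True then show ?thesis using Suc by (simp add: Let_def)
  next
    case False
    have nt: "\<not> total ((set ?h)\<^sup>+)" using False rel_of_set by metis
    obtain x y where "unranked ((set ?h)\<^sup>+) x y \<and> (\<forall>W''. tournament W'' \<and> set ?h \<subseteq> W'' \<longrightarrow> ((x,y) \<in> \<rho> W'' \<longleftrightarrow> (x,y) \<in> W''))"
      using good_pair[OF rm fa co W _ _ nt] Suc by blast
    then have "good \<rho> ?h (x,y)" unfolding good_def using rel_of_set by (metis fst_conv snd_conv)
    then have g: "good \<rho> ?h (strat \<rho> ?h)" using strat_good by blast
    define p where "p = strat \<rho> ?h"
    obtain a b where ab: "p = (a,b)" by fastforce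
    have "unranked (rel_of ?h) a b" using g p_def ab unfolding good_def by (metis fst_conv snd_conv)
    then have anb: "a \<noteq> b" unfolding unranked_def by simp
    have pne: "fst p \<noteq> snd p" using anb ab by simp
    define d where "d = duel W p"
    have dW: "d \<in> W" using duel_in[OF W pne] d_def by simp
    have dc: "d = (a,b) \<or> d = (b,a)" using duel_cases[of W p] d_def ab by auto
    have hs: "hist_at (strat \<rho>) W (Suc n) = ?h @ [d]" using False d_def p_def by (simp add: Let_def)
    have "\<forall>W'. tournament W' \<and> set ?h \<subseteq> W' \<and> d \<in> W' \<longrightarrow> d \<in> \<rho> W'"
    proof (intro allI impI)
      fix W' assume a: "tournament W' \<and> set ?h \<subseteq> W' \<and> d \<in> W'"
      have "p \<in> \<rho> W' \<longleftrightarrow> p \<in> W'" using g a p_def unfolding good_def by blast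
      then have pr: "(a,b) \<in> \<rho> W' \<longleftrightarrow> (a,b) \<in> W'" using ab by simp
      have rk: "ranking (\<rho> W')" using ranking_method_D[OF rm] a by blast
      show "d \<in> \<rho> W'"
      proof (cases "d = (a,b)")
        case True then show ?thesis using pr a by simp
      next
        case False
        then have "d = (b,a)" using dc by simp
        then have "(a,b) \<notin> W'" using a unfolding tournament_iff by blast
        then have "(a,b) \<notin> \<rho> W'" using pr by simp
        then show ?thesis using rk anb \<open>d = (b,a)\<close> unfolding ranking_iff by blast
      qed
    qed
    then show ?thesis using Suc dW hs by auto
  qed
qed

lemma strat_card:
  fixes \<rho> :: "('a::finite) rel \<Rightarrow> 'a rel"
  shows "total (rel_of (hist_at (strat \<rho>) W n)) \<or> n \<le> card (rel_of (hist_at (strat \<rho>) W n))"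
proof (induction n)
  case 0 then show ?case by simp
next
  case (Suc n)
  let ?h = "hist_at (strat \<rho>) W n"
  show ?case
  proof (cases "total (rel_of ?h)")
    case True then show ?thesis by (simp add: Let_def)
  next
    case False
    define p where "p = strat \<rho> ?h"
    have u: "unranked (rel_of ?h) (fst p) (snd p)" using strat_unranked[OF False] p_def by simp
    define d where "d = duel W p"
    have dn: "d \<notin> rel_of ?h" using u duel_cases[of W p] d_def unfolding unranked_def by (cases p) auto
    have hs: "hist_at (strat \<rho>) W (Suc n) = ?h @ [d]" using False d_def p_def by (simp add: Let_def)
    have sub: "insert d (rel_of ?h) \<subseteq> rel_of (?h @ [d])" unfolding rel_of_snoc by (meson subsetI r_into_trancl')
    have "card (rel_of ?h) < card (insert d (rel_of ?h))" using dn by (simp add: card_insert_if)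
    also have "\<dots> \<le> card (rel_of (?h @ [d]))" using sub card_mono finite by blast
    finally show ?thesis using Suc False hs by simp
  qed
qed

lemma strat_terminates:
  fixes \<rho> :: "('a::finite) rel \<Rightarrow> 'a rel"
  shows "\<exists>n. total (rel_of (hist_at (strat \<rho>) W n))"
proof -
  let ?n = "Suc (card (UNIV :: ('a \<times> 'a) set))"
  have "card (rel_of (hist_at (strat \<rho>) W ?n)) \<le> card (UNIV :: ('a \<times> 'a) set)"
    by (rule card_mono) (rule finite, rule subset_UNIV)
  then show ?thesis using strat_card[of \<rho> W ?n] by (meson Suc_n_not_le_n le_trans)
qed

lemma sufficiency:
  fixes \<rho> :: "('a::finite) rel \<Rightarrow> 'a rel"
  assumes rm: "ranking_method \<rho>" and fa: "faithful \<rho>" and co: "consistent \<rho>"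
  shows "feasible \<rho>"
  unfolding feasible_def
proof (intro exI conjI allI impI)
  show "is_strategy (strat \<rho>)" by (rule strat_is_strategy)
  fix W :: "'a rel" assume W: "tournament W"
  obtain n where n: "total (rel_of (hist_at (strat \<rho>) W n))" using strat_terminates by blast
  let ?S = "set (hist_at (strat \<rho>) W n)"
  have "?S \<subseteq> \<rho> W" using strat_inv[OF rm fa co W, of n] W by blast
  then have "rel_of (hist_at (strat \<rho>) W n) \<subseteq> \<rho> W"
    using rel_of_set trancl_sub_trans ranking_trans ranking_method_D[OF rm W] by metis
  then have "rel_of (hist_at (strat \<rho>) W n) = \<rho> W"
    using sub_total_eq n ranking_method_D[OF rm W] by blast
  then show "outcome (strat \<rho>) W (\<rho> W)" unfolding outcome_def using n by metis
qed

theorem proposition8: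
  fixes \<rho> :: "('a::finite) rel \<Rightarrow> 'a rel"
  assumes "ranking_method \<rho>"
  shows "feasible \<rho> \<longleftrightarrow> faithful \<rho> \<and> consistent \<rho>"
proof
  assume f: "feasible \<rho>"
  show "faithful \<rho> \<and> consistent \<rho>"
    using feasible_faithful[OF assms f] feasible_consistent[OF assms f] by (rule conjI)
next
  assume "faithful \<rho> \<and> consistent \<rho>"
  then show "feasible \<rho>" using sufficiency[OF assms] by blast
qed

end
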